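(* For $\epsilon\in(0,1)$ and every $x\in\{0,1\}^n$ with Hamming weight $|x|\in[n/2,\,n/2+0.05\,\epsilon\sqrt n]$, if $\mathbf T\sim\mathsf{Talagrand}(n,\epsilon)$ then $\Pr_{\mathbf T}\big[|S_{\mathbf T}(x)|=1\big]>0.03$.
   Context: $\mathsf{Talagrand}(n,\epsilon)$ is the following distribution: let $L=0.1\cdot 2^{\sqrt n/\epsilon}$; independently for each $i=1,\dots,L$, draw a set $\mathbf T_i\subseteq[n]$ by choosing $\sqrt n/\epsilon$ elements of $[n]$ independently and uniformly with replacement (quantities are assumed/rounded to be integers). For $T=(T_1,\dots,T_L)$ and $x\in\{0,1\}^n$, $T_\ell(x)=1$ iff $x_j=1$ for all $j\in T_\ell$, and $S_T(x)=\{\ell\in[L]:T_\ell(x)=1\}$. $|x|$ denotes the number of ones in $x$. *)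

theory Defs
  imports "HOL-Probability.Probability"
begin

definition tal_k :: "nat \<Rightarrow> real \<Rightarrow> nat" where
  "tal_k n \<epsilon> = nat \<lceil>sqrt (real n) / \<epsilon>\<rceil>"

definition tal_L :: "nat \<Rightarrow> real \<Rightarrow> nat" where
  "tal_L n \<epsilon> = nat \<lceil>(0.1::real) * 2 ^ tal_k n \<epsilon>\<rceil>"

text \<open>Talagrand(n, eps): a family T_1..T_L of subsets of [n] = {1..n}; each T_l
  is the set of k = tal_k n eps elements of [n] drawn independently and uniformly
  with replacement, independently over l.  The joint draw is realised as a
  uniformly random function (l, j) \<mapsto> element of [n] for l in [L], j in [k]
  (uniform on the product = independent uniform coordinates).\<close>
definition talagrand :: "nat \<Rightarrow> real \<Rightarrow> (nat \<Rightarrow> nat set) pmf" where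
  "talagrand n \<epsilon> =
     map_pmf (\<lambda>f l. if l \<in> {1..tal_L n \<epsilon>} then f l ` {1..tal_k n \<epsilon>} else {})
       (pmf_of_set (PiE {1..tal_L n \<epsilon>} (\<lambda>_. PiE {1..tal_k n \<epsilon>} (\<lambda>_. {1..n}))))"

text \<open>A point x in {0,1}^n is represented by its support X \<subseteq> {1..n}, so |x| = card X.
  T_l(x) = 1 iff every j in T_l has x_j = 1, i.e. T_l \<subseteq> X.\<close>
definition tal_S :: "nat \<Rightarrow> real \<Rightarrow> (nat \<Rightarrow> nat set) \<Rightarrow> nat set \<Rightarrow> nat set" where
  "tal_S n \<epsilon> T X = {l \<in> {1..tal_L n \<epsilon>}. T l \<subseteq> X}"

end

theory Submission imports Defs begin

lemma count_E:
  fixes L k n :: nat and X :: "nat set"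
  assumes X: "X \<subseteq> {1..n}"
  defines "A \<equiv> PiE {1..k} (\<lambda>_. {1..n})"
  defines "G \<equiv> PiE {1..k} (\<lambda>_. X)"
  shows "card {f \<in> PiE {1..L} (\<lambda>_. A). card {l \<in> {1..L}. f l ` {1..k} \<subseteq> X} = 1}
         = L * (card X ^ k * (n ^ k - card X ^ k) ^ (L - 1))"
proof -
  have finX: "finite X" using X finite_subset by blast
  have GA: "G \<subseteq> A" unfolding G_def A_def using X by (auto simp: PiE_iff)
  have cA: "card A = n ^ k" unfolding A_def by (simp add: card_PiE)
  have cG: "card G = card X ^ k" unfolding G_def by (simp add: card_PiE)
  have finA: "finite A" unfolding A_def by (simp add: finite_PiE)
  have row: "g ` {1..k} \<subseteq> X \<longleftrightarrow> g \<in> G" if "g \<in> A" for g :: "nat \<Rightarrow> nat"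
    using that unfolding A_def G_def by (auto simp: PiE_iff)
  define P where "P l0 = PiE {1..L} (\<lambda>l. if l = l0 then G else A - G)" for l0
  have eq: "{f \<in> PiE {1..L} (\<lambda>_. A). card {l \<in> {1..L}. f l ` {1..k} \<subseteq> X} = 1}
        = (\<Union>l0\<in>{1..L}. P l0)"
  proof (intro equalityI subsetI)
    fix f assume "f \<in> {f \<in> PiE {1..L} (\<lambda>_. A). card {l \<in> {1..L}. f l ` {1..k} \<subseteq> X} = 1}"
    then have f: "f \<in> PiE {1..L} (\<lambda>_. A)" and c: "card {l \<in> {1..L}. f l ` {1..k} \<subseteq> X} = 1" by auto
    from c obtain l0 where l0: "{l \<in> {1..L}. f l ` {1..k} \<subseteq> X} = {l0}" by (auto simp: card_1_singleton_iff)
    have rowf: "f l ` {1..k} \<subseteq> X \<longleftrightarrow> f l \<in> G" if "l \<in> {1..L}" for l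
      using row[OF PiE_mem[OF f that]] .
    have "{l \<in> {1..L}. f l \<in> G} = {l \<in> {1..L}. f l ` {1..k} \<subseteq> X}"
      using rowf by auto
    with l0 have S: "{l \<in> {1..L}. f l \<in> G} = {l0}" by simp
    have "f \<in> P l0"
    proof -
      have "l0 \<in> {l \<in> {1..L}. f l \<in> G}" using S by simp
      then have g: "f l0 \<in> G" by simp
      have ng: "f l \<notin> G" if "l \<in> {1..L}" "l \<noteq> l0" for l
      proof
        assume "f l \<in> G"
        then have "l \<in> {l \<in> {1..L}. f l \<in> G}" using that by simp
        then have "l \<in> {l0}" by (simp only: S)
        then show False using that(2) by simp
      qed
      show ?thesis unfolding P_def using f g ng by (auto simp: PiE_iff)
    qed
    moreover have "l0 \<in> {1..L}" using S by auto
    ultimately show "f \<in> (\<Union>l0\<in>{1..L}. P l0)" by auto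
  next
    fix f assume "f \<in> (\<Union>l0\<in>{1..L}. P l0)"
    then obtain l0 where l0: "l0 \<in> {1..L}" and f: "f \<in> P l0" by auto
    have fA: "f \<in> PiE {1..L} (\<lambda>_. A)" using f GA unfolding P_def by (auto simp: PiE_iff split: if_splits)
    have "{l \<in> {1..L}. f l ` {1..k} \<subseteq> X} = {l \<in> {1..L}. f l \<in> G}"
    proof -
      have rowf: "f l ` {1..k} \<subseteq> X \<longleftrightarrow> f l \<in> G" if "l \<in> {1..L}" for l
        using row[OF PiE_mem[OF fA that]] .
      then show ?thesis by auto
    qed
    also have "\<dots> = {l0}" using f l0 unfolding P_def by (auto simp: PiE_iff split: if_splits)
    finally show "f \<in> {f \<in> PiE {1..L} (\<lambda>_. A). card {l \<in> {1..L}. f l ` {1..k} \<subseteq> X} = 1}"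
      using fA by simp
  qed
  have cP: "card (P l0) = card X ^ k * (n ^ k - card X ^ k) ^ (L - 1)" if "l0 \<in> {1..L}" for l0
  proof -
    have "card (P l0) = (\<Prod>l\<in>{1..L}. card (if l = l0 then G else A - G))"
      unfolding P_def by (simp add: card_PiE)
    also have "\<dots> = card G * (\<Prod>l\<in>{1..L} - {l0}. card (A - G))"
      using that by (subst prod.remove[of _ l0]) auto
    also have "\<dots> = card G * card (A - G) ^ (L - 1)" using that by simp
    also have "card (A - G) = card A - card G" using GA finA by (simp add: card_Diff_subset finite_subset)
    finally show ?thesis using cA cG by simp
  qed
  have "card (\<Union>l0\<in>{1..L}. P l0) = (\<Sum>l0\<in>{1..L}. card (P l0))"
  proof (rule card_UN_disjoint)
    show "\<forall>i\<in>{1..L}. finite (P i)" unfolding P_def using finA finite_subset[OF GA finA] by (auto intro!: finite_PiE)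
    show "\<forall>i\<in>{1..L}. \<forall>j\<in>{1..L}. i \<noteq> j \<longrightarrow> P i \<inter> P j = {}"
    proof (intro ballI impI)
      fix i j assume ij: "i \<in> {1..L}" "j \<in> {1..L}" "i \<noteq> j"
      show "P i \<inter> P j = {}"
      proof (rule ccontr)
        assume "P i \<inter> P j \<noteq> {}"
        then obtain f where fi: "f \<in> P i" and fj: "f \<in> P j" by blast
        have "f i \<in> G" using PiE_mem[of f "{1..L}" "\<lambda>l. if l = i then G else A - G" i] fi ij
          unfolding P_def by simp
        moreover have "f i \<in> A - G" using PiE_mem[of f "{1..L}" "\<lambda>l. if l = j then G else A - G" i] fj ij
          unfolding P_def by simp
        ultimately show False by simp
      qed
    qed
  qed simp
  also have "\<dots> = L * (card X ^ k * (n ^ k - card X ^ k) ^ (L - 1))" using cP by simp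
  finally show ?thesis using eq by simp
qed

lemma prob_formula:
  assumes X: "X \<subseteq> {1..n}" and nk: "1 \<le> n \<or> tal_k n \<epsilon> = 0"
  shows "measure_pmf.prob (talagrand n \<epsilon>) {T. card (tal_S n \<epsilon> T X) = 1}
     = real (tal_L n \<epsilon> * (card X ^ tal_k n \<epsilon> * (n ^ tal_k n \<epsilon> - card X ^ tal_k n \<epsilon>) ^ (tal_L n \<epsilon> - 1)))
       / real ((n ^ tal_k n \<epsilon>) ^ tal_L n \<epsilon>)"
proof -
  define L where "L = tal_L n \<epsilon>"
  define k where "k = tal_k n \<epsilon>"
  define A where "A = PiE {1..k} (\<lambda>_. {1..n})"
  define \<Omega> where "\<Omega> = PiE {1..L} (\<lambda>_. A)"
  define h where "h = (\<lambda>f l. if l \<in> {1..L} then f l ` {1..k} else ({}::nat set))"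
  have A_ne: "A \<noteq> {}" unfolding A_def using nk k_def by (auto simp: PiE_eq_empty_iff)
  have \<Omega>_ne: "\<Omega> \<noteq> {}" unfolding \<Omega>_def using A_ne by (auto simp: PiE_eq_empty_iff)
  have finA: "finite A" unfolding A_def by (simp add: finite_PiE)
  have fin\<Omega>: "finite \<Omega>" unfolding \<Omega>_def using finA by (simp add: finite_PiE)
  have tal: "talagrand n \<epsilon> = map_pmf h (pmf_of_set \<Omega>)"
    unfolding talagrand_def h_def \<Omega>_def A_def L_def k_def ..
  have E: "\<Omega> \<inter> h -` {T. card (tal_S n \<epsilon> T X) = 1}
      = {f \<in> PiE {1..L} (\<lambda>_. A). card {l \<in> {1..L}. f l ` {1..k} \<subseteq> X} = 1}"
  proof -
    have "tal_S n \<epsilon> (h f) X = {l \<in> {1..L}. f l ` {1..k} \<subseteq> X}" for f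
      unfolding tal_S_def h_def L_def by auto
    then show ?thesis unfolding \<Omega>_def by auto
  qed
  have c\<Omega>: "card \<Omega> = (n ^ k) ^ L"
    unfolding \<Omega>_def A_def by (simp add: card_PiE)
  show ?thesis
    unfolding tal measure_map_pmf measure_pmf_of_set[OF \<Omega>_ne fin\<Omega>] E
    using count_E[OF X, of L k] c\<Omega> unfolding A_def L_def k_def by simp
qed

lemma exp_02: "exp (0.2::real) \<le> 1.25"
proof (rule ccontr)
  assume "\<not> ?thesis"
  then have "(1.25::real) ^ 5 < exp 0.2 ^ 5" by (intro power_strict_mono) auto
  also have "exp (0.2::real) ^ 5 = exp 1" by (simp add: exp_of_nat_mult[symmetric])
  moreover have "(3::real) < 1.25 ^ 5" by (simp add: eval_nat_numeral)
  ultimately show False using exp_le by linarith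
qed

lemma key_ineq:
  fixes lam p :: real and L :: nat
  assumes "1/10 \<le> lam" "lam \<le> 7/16" "lam = L * p" "0 \<le> p" "p \<le> 1" "1 \<le> L"
  shows "lam * (1 - p) ^ (L - 1) > 0.03"
proof -
  have "1 + real (L - 1) * (- p) \<le> (1 + - p) ^ (L - 1)"
    by (rule Bernoulli_inequality) (use assms in auto)
  moreover have "real (L - 1) * p \<le> lam"
    using assms mult_right_mono[of "real (L - 1)" "real L" p] by simp
  ultimately have "1 - lam \<le> (1 - p) ^ (L - 1)" by simp
  then have "lam * (1 - lam) \<le> lam * (1 - p) ^ (L - 1)"
    using assms by (intro mult_left_mono) auto
  moreover have "lam * (1 - lam) > 3/100"
  proof -
    have h: "0 \<le> (lam - 1/10) * (7/16 - lam)" using assms by (intro mult_nonneg_nonneg) auto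
    have "lam * (1 - lam) = (lam - 1/10) * (7/16 - lam) + 37/80 * lam + 7/160"
      by (simp add: field_simps)
    then show ?thesis using h assms by linarith
  qed
  moreover have "(0.03::real) = 3/100" by simp
  ultimately show ?thesis by linarith
qed

lemma nat_ceil_ge: "x \<le> real (nat \<lceil>x\<rceil>)"
proof (cases "\<lceil>x\<rceil> \<ge> 0")
  case True
  then have "real (nat \<lceil>x\<rceil>) = of_int \<lceil>x\<rceil>" by simp
  then show ?thesis using le_of_int_ceiling[of x] by linarith
next
  case False
  then have "x < 0" by simp
  then show ?thesis by simp
qed

lemma nat_ceil_le: "0 \<le> x \<Longrightarrow> real (nat \<lceil>x\<rceil>) \<le> x + 1"
proof -
  assume "0 \<le> x"
  then have "\<lceil>x\<rceil> \<ge> 0" by simp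
  then have "real (nat \<lceil>x\<rceil>) = of_int \<lceil>x\<rceil>" by simp
  then show ?thesis using of_int_ceiling_le_add_one[of x] by linarith
qed

lemma aux_frac:
  fixes a C D N :: real and m :: nat
  assumes "N > 0"
  shows "a * (C * D ^ m) / (N * N ^ m) = a * (C / N) * (D / N) ^ m"
  using assms by (simp add: power_divide)

theorem mainTheorem4:
  fixes n :: nat and \<epsilon> :: real and X :: "nat set"
  assumes "0 < \<epsilon>" and "\<epsilon> < 1"
    and "X \<subseteq> {1..n}"
    and "real n / 2 \<le> real (card X)"
    and "real (card X) \<le> real n / 2 + 0.05 * \<epsilon> * sqrt (real n)"
  shows "measure_pmf.prob (talagrand n \<epsilon>) {T. card (tal_S n \<epsilon> T X) = 1} > 0.03"
proof (cases "n = 0")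
  case True
  have k0: "tal_k n \<epsilon> = 0" using True by (simp add: tal_k_def)
  have "\<lceil>(1/10::real)\<rceil> = 1" by (simp add: ceiling_eq_iff)
  then have L1: "tal_L n \<epsilon> = 1" using k0 by (simp add: tal_L_def)
  have X0: "X = {}" using assms(3) True by auto
  show ?thesis
    unfolding prob_formula[OF assms(3) disjI2[OF k0]] using k0 L1 X0 True by simp
next
  case False
  then have n1: "1 \<le> n" by simp
  define k where "k = tal_k n \<epsilon>"
  define L where "L = tal_L n \<epsilon>"
  define c where "c = card X"
  have cn: "c \<le> n" unfolding c_def using assms(3) card_mono[of "{1..n}" X] by simp
  have sn: "sqrt (real n) > 0" using n1 by simp
  have n2: "n \<ge> 2"
  proof (rule ccontr)
    assume "\<not> n \<ge> 2"
    then have "n = 1" using n1 by simp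
    then have h4: "1 \<le> real (card X) * 2" "real (card X) \<le> 1/2 + \<epsilon>/20" using assms(4,5) by simp_all
    then have "card X \<ge> 1" by (cases "card X") auto
    then have "real (card X) \<ge> 1" by simp
    then show False using h4 assms(2) by linarith
  qed
  have sn2: "sqrt (real n) > 1" using n2 by simp
  have kge: "real k \<ge> sqrt (real n) / \<epsilon>" unfolding k_def tal_k_def by (rule nat_ceil_ge)
  have kle: "real k \<le> sqrt (real n) / \<epsilon> + 1" unfolding k_def tal_k_def
    using sn assms(1) by (intro nat_ceil_le) simp
  have "sqrt (real n) / \<epsilon> > 1"
  proof -
    have "\<epsilon> < sqrt (real n)" using sn2 assms(2) by linarith
    then show ?thesis using assms(1) by (simp add: less_divide_eq)
  qed
  then have k2: "k \<ge> 2" using kge by linarith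
  have Lge: "real L \<ge> 0.1 * 2 ^ k" unfolding L_def k_def tal_L_def by (rule nat_ceil_ge)
  have Lle: "real L \<le> 0.1 * 2 ^ k + 1" unfolding L_def k_def tal_L_def by (intro nat_ceil_le) simp
  have L1: "L \<ge> 1" proof -
    have "(0::real) < 0.1 * 2 ^ k" by simp
    then show ?thesis using Lge by linarith
  qed
  define q where "q = real c / real n"
  have qge: "q \<ge> 1/2" using assms(4) n1 unfolding q_def c_def by (simp add: field_simps)
  have qle1: "q \<le> 1" using cn n1 unfolding q_def by simp
  have qle: "2 * q \<le> 1 + 0.1 * \<epsilon> / sqrt (real n)"
  proof -
    define s where "s = sqrt (real n)"
    have s0: "s > 0" unfolding s_def using sn .
    have ns: "real n = s * s" unfolding s_def by simp
    have np: "real n > 0" using n1 by simp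
    have e1: "(1 + 0.1 * \<epsilon> / s) * real n = real n + 0.1 * \<epsilon> * s"
      unfolding ns using s0 by (simp add: field_simps)
    have e2: "2 * q * real n = 2 * real c" unfolding q_def using np by simp
    have "2 * real c \<le> real n + 0.1 * \<epsilon> * s" using assms(5) unfolding c_def s_def by simp
    then have "2 * q * real n \<le> (1 + 0.1 * \<epsilon> / s) * real n" using e1 e2 by simp
    then have "2 * q \<le> 1 + 0.1 * \<epsilon> / s" using np by simp
    then show ?thesis unfolding s_def .
  qed
  define a where "a = 0.1 * \<epsilon> / sqrt (real n)"
  have a0: "a \<ge> 0" unfolding a_def using assms(1) sn by simp
  have ea: "\<epsilon> / sqrt (real n) \<le> 1"
  proof -
    have "\<epsilon> \<le> sqrt (real n)" using sn2 assms(2) by linarith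
    then show ?thesis using sn by (simp add: divide_le_eq)
  qed
  have ka: "real k * a \<le> 0.2"
  proof -
    have "real k * a \<le> (sqrt (real n) / \<epsilon> + 1) * a" using kle a0 by (rule mult_right_mono)
    also have "\<dots> = 0.1 + a" unfolding a_def using assms(1) sn by (simp add: field_simps)
    finally have "real k * a \<le> 0.1 + a" .
    moreover have "a \<le> 0.1"
    proof -
      have "a = 0.1 * (\<epsilon> / sqrt (real n))" unfolding a_def by simp
      then show ?thesis using ea by linarith
    qed
    ultimately show ?thesis by linarith
  qed
  have pow2q: "(2 * q) ^ k \<le> 1.25"
  proof -
    have "2 * q \<le> exp a" using qle exp_ge_add_one_self[of a] unfolding a_def by linarith
    then have "(2 * q) ^ k \<le> (exp a) ^ k"
      by (rule power_mono) (use qge in simp)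
    also have "\<dots> = exp (real k * a)" by (simp add: exp_of_nat_mult)
    also have "\<dots> \<le> exp 0.2" using ka by simp
    also have "\<dots> \<le> 1.25" by (rule exp_02)
    finally show ?thesis .
  qed
  define p where "p = q ^ k"
  have p0: "0 \<le> p" "p \<le> 1" unfolding p_def using qge qle1 by (auto intro: power_le_one)
  have pge: "p \<ge> (1/2) ^ k" unfolding p_def using qge by (intro power_mono) auto
  have peq: "p = (1/2)^k * (2*q)^k" unfolding p_def power_mult_distrib[symmetric] by simp
  define lam where "lam = real L * p"
  have lam1: "lam \<ge> 1/10"
  proof -
    have "0.1 * 2 ^ k * (1/2) ^ k \<le> real L * p" using Lge pge p0
      by (intro mult_mono) auto
    then show ?thesis unfolding lam_def by (simp add: power_one_over)
  qed
  have lam2: "lam \<le> 7/16"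
  proof -
    have hk: "(1/2::real) ^ k \<le> 1/4"
    proof -
      have "(1/2::real) ^ k \<le> (1/2) ^ 2" using k2 by (intro power_decreasing) auto
      then show ?thesis by (simp add: power2_eq_square)
    qed
    have "lam = real L * (1/2)^k * (2*q)^k" unfolding lam_def peq by simp
    also have "\<dots> \<le> (0.1 * 2 ^ k + 1) * (1/2)^k * 1.25"
      using Lle pow2q qge by (intro mult_mono) auto
    also have "\<dots> = (0.1 + (1/2)^k) * 1.25" by (simp add: algebra_simps power_one_over)
    also have "\<dots> \<le> 7/16" using hk by simp
    finally show ?thesis .
  qed
  have P: "measure_pmf.prob (talagrand n \<epsilon>) {T. card (tal_S n \<epsilon> T X) = 1} = lam * (1 - p) ^ (L - 1)"
  proof -
    have nk: "real (n ^ k) > 0" using n1 by simp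
    have "real (L * (c ^ k * (n ^ k - c ^ k) ^ (L - 1))) / real ((n ^ k) ^ L)
        = real L * (real c ^ k / real n ^ k) * ((real n ^ k - real c ^ k) / real n ^ k) ^ (L - 1)"
    proof -
      have ck: "c ^ k \<le> n ^ k" using cn by (rule power_mono) simp
      have "(real n ^ k) ^ L = real n ^ k * (real n ^ k) ^ (L - 1)" using L1
        by (metis One_nat_def Suc_diff_le diff_Suc_1 power_Suc)
      note pw = this
      have e: "real (n ^ k - c ^ k) = real n ^ k - real c ^ k" using ck by (simp add: of_nat_diff)
      have "real (L * (c ^ k * (n ^ k - c ^ k) ^ (L - 1))) / real ((n ^ k) ^ L)
          = real L * (real c ^ k * (real n ^ k - real c ^ k) ^ (L - 1)) / (real n ^ k * (real n ^ k) ^ (L - 1))"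
        by (simp only: of_nat_mult of_nat_power e pw)
      also have "\<dots> = real L * (real c ^ k / real n ^ k) * ((real n ^ k - real c ^ k) / real n ^ k) ^ (L - 1)"
        by (rule aux_frac) (use nk in simp)
      finally show ?thesis .
    qed
    moreover have "real c ^ k / real n ^ k = p" unfolding p_def q_def by (simp add: power_divide)
    moreover have "(real n ^ k - real c ^ k) / real n ^ k = 1 - p" using nk unfolding p_def q_def
      by (simp add: power_divide diff_divide_distrib)
    ultimately show ?thesis unfolding prob_formula[OF assms(3) disjI1[OF n1]] lam_def c_def k_def L_def
      by simp
  qed
  show ?thesis unfolding P
    by (rule key_ineq[OF lam1 lam2 _ p0 L1]) (simp add: lam_def)
qed

end
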